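(* Let $f:\mathbb{R}^n\to\mathbb{R}^n$ be locally Lipschitz with $f(0)=0$ and let $V\in C^2(\mathbb{R}^n;\mathbb{R}^+)$ be a Lyapunov function for $\dot z=f(z)$. Let $r>0$ and define $q(x):=\max\{f(x)'\nabla^2V(x+hf(x))f(x):h\in[0,r]\}$. Suppose there exist constants $\delta\in(0,r]$, $\lambda\in(0,1)$ and a neighborhood $\mathcal N$ of $0$ such that $\delta q(x)\le-2(1-\lambda)\nabla V(x)f(x)$ for all $x\in\mathcal N$. Then there exists a continuous $\varphi:\mathbb{R}^n\to(0,r]$ such that $0$ is URGAS for the hybrid system (2.2) with $F(h,x):=f(x)$ (explicit Euler). More precisely, $0$ is URGAS for (2.2) with $F(h,x)=f(x)$ whenever $\varphi:\mathbb{R}^n\to(0,r]$ is continuous and satisfies $\varphi(x)q(x)\le-2(1-\lambda)\nabla V(x)f(x)$ for all $x\in\mathbb{R}^n$.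
   Context: The hybrid system (2.2) with $F(h,x)=f(x)$: for each locally bounded $u:\mathbb{R}^+\to\mathbb{R}^+$ and $x_0$, $\tau_0=0$, $x(0)=x_0$, $h_i=\varphi(x(\tau_i))\exp(-u(\tau_i))$, $\tau_{i+1}=\tau_i+h_i$, $x(t)=x(\tau_i)+(t-\tau_i)f(x(\tau_i))$ on $[\tau_i,\tau_{i+1}]$; denote the solution $x(t,x_0;u)$. URGAS: (a) for every $\varepsilon>0$ there is $\delta'>0$ with $|x_0|<\delta'\Rightarrow|x(t,x_0;u)|<\varepsilon$ for all $t\ge0$ and all $u$; (b) for every $R$, $\sup\{|x(t,x_0;u)|:t\ge0,|x_0|\le R,u\}<\infty$; (c) for all $\varepsilon,R$ there is $T$ with $|x(t,x_0;u)|\le\varepsilon$ for $t\ge T$, $|x_0|\le R$, all locally bounded $u\ge0$. A Lyapunov function for $\dot z=f(z)$ is a positive definite, radially unbounded $C^1$ function $V$ with $\nabla V(x)f(x)<0$ for $x\ne0$. $\nabla^2V$ is the Hessian. *)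

theory Defs
  imports "HOL-Analysis.Analysis"
begin

definition loc_lipschitz :: "('a::metric_space \<Rightarrow> 'b::metric_space) \<Rightarrow> bool" where
  "loc_lipschitz f \<longleftrightarrow> (\<forall>x. \<exists>e>0. \<exists>L. lipschitz_on L (ball x e) f)"

definition admissible_input :: "(real \<Rightarrow> real) \<Rightarrow> bool" where
  "admissible_input u \<longleftrightarrow> (\<forall>t\<ge>0. u t \<ge> 0) \<and> (\<forall>T. bdd_above (u ` {0..T}))"

text \<open>Sampling times tau_i and states x(tau_i) of the hybrid system (2.2) with F(h,x) = f(x):
  h_i = phi(x(tau_i)) exp(-u(tau_i)), tau_{i+1} = tau_i + h_i, x(tau_{i+1}) = x(tau_i) + h_i f(x(tau_i)).\<close>
definition hyb_state ::
  "('a::real_normed_vector \<Rightarrow> 'a) \<Rightarrow> ('a \<Rightarrow> real) \<Rightarrow> (real \<Rightarrow> real) \<Rightarrow> 'a \<Rightarrow> nat \<Rightarrow> real \<times> 'a" where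
  "hyb_state f \<phi> u x0 i =
     ((\<lambda>(\<tau>, x). let h = \<phi> x * exp (- u \<tau>) in (\<tau> + h, x + h *\<^sub>R f x)) ^^ i) (0, x0)"

definition hyb_sol ::
  "('a::real_normed_vector \<Rightarrow> 'a) \<Rightarrow> ('a \<Rightarrow> real) \<Rightarrow> (real \<Rightarrow> real) \<Rightarrow> 'a \<Rightarrow> real \<Rightarrow> 'a \<Rightarrow> bool" where
  "hyb_sol f \<phi> u x0 t y \<longleftrightarrow>
     (\<exists>i. fst (hyb_state f \<phi> u x0 i) \<le> t \<and> t \<le> fst (hyb_state f \<phi> u x0 (Suc i)) \<and>
          y = snd (hyb_state f \<phi> u x0 i) + (t - fst (hyb_state f \<phi> u x0 i)) *\<^sub>R f (snd (hyb_state f \<phi> u x0 i)))"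

text \<open>Uniform robust global asymptotic stability of 0 for the hybrid system (2.2), F(h,x) = f(x).
  The first conjunct records that solutions are defined for all t \<ge> 0 (implicit in the paper).\<close>
definition URGAS :: "('a::real_normed_vector \<Rightarrow> 'a) \<Rightarrow> ('a \<Rightarrow> real) \<Rightarrow> bool" where
  "URGAS f \<phi> \<longleftrightarrow>
     (\<forall>x0 u. admissible_input u \<longrightarrow> (\<forall>t\<ge>0. \<exists>y. hyb_sol f \<phi> u x0 t y)) \<and>
     (\<forall>\<epsilon>>0. \<exists>\<delta>'>0. \<forall>x0 u t y. admissible_input u \<and> norm x0 < \<delta>' \<and> t \<ge> 0 \<and>
         hyb_sol f \<phi> u x0 t y \<longrightarrow> norm y < \<epsilon>) \<and>
     (\<forall>R. \<exists>M. \<forall>x0 u t y. admissible_input u \<and> norm x0 \<le> R \<and> t \<ge> 0 \<and>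
         hyb_sol f \<phi> u x0 t y \<longrightarrow> norm y \<le> M) \<and>
     (\<forall>\<epsilon>>0. \<forall>R. \<exists>T. \<forall>x0 u t y. admissible_input u \<and> norm x0 \<le> R \<and> t \<ge> T \<and>
         hyb_sol f \<phi> u x0 t y \<longrightarrow> norm y \<le> \<epsilon>)"

text \<open>q(x) = max { f(x)' Hess V(x + h f(x)) f(x) : h \<in> [0,r] }, with HV the Hessian of V.\<close>
definition q_fun :: "(real^'n \<Rightarrow> real^'n) \<Rightarrow> (real^'n \<Rightarrow> real^'n^'n) \<Rightarrow> real \<Rightarrow> real^'n \<Rightarrow> real" where
  "q_fun f HV r x = Sup ((\<lambda>h. f x \<bullet> (HV (x + h *\<^sub>R f x) *v f x)) ` {0..r})"

end

theory Submission
  imports Defs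
begin


lemma taylor_bound:
  fixes V :: "'a::real_inner \<Rightarrow> real" and DV :: "'a \<Rightarrow> 'a" and H :: "'a \<Rightarrow> 'a \<Rightarrow> 'a"
  assumes V_deriv: "\<And>x. (V has_derivative (\<lambda>v. DV x \<bullet> v)) (at x)"
    and DV_deriv: "\<And>x. (DV has_derivative (H x)) (at x)"
    and Qb: "\<And>s. s \<in> {0..r} \<Longrightarrow> v \<bullet> H (x + s *\<^sub>R v) v \<le> Q"
    and h: "0 \<le> h" "h \<le> r"
  shows "V (x + h *\<^sub>R v) \<le> V x + h * (DV x \<bullet> v) + h^2 / 2 * Q"
proof -
  have lin: "((\<lambda>s. x + s *\<^sub>R v) has_derivative (\<lambda>t. t *\<^sub>R v)) (at s)" for s :: real
    by (auto intro!: derivative_eq_intros)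
  have dw: "((\<lambda>s. V (x + s *\<^sub>R v)) has_real_derivative (DV (x + s *\<^sub>R v) \<bullet> v)) (at s)" for s
  proof -
    have "((\<lambda>s. V (x + s *\<^sub>R v)) has_derivative (\<lambda>t. DV (x + s *\<^sub>R v) \<bullet> (t *\<^sub>R v))) (at s)"
      by (rule has_derivative_compose[OF lin V_deriv])
    moreover have "(\<lambda>t. DV (x + s *\<^sub>R v) \<bullet> (t *\<^sub>R v)) = (*) (DV (x + s *\<^sub>R v) \<bullet> v)"
      by (auto simp: mult.commute)
    ultimately show ?thesis by (simp add: has_field_derivative_def)
  qed
  have dw1: "((\<lambda>s. DV (x + s *\<^sub>R v) \<bullet> v) has_real_derivative (v \<bullet> H (x + s *\<^sub>R v) v)) (at s)" for s
  proof -
    have hl: "linear (H y)" for y using DV_deriv[of y] has_derivative_linear by blast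
    have "((\<lambda>s. DV (x + s *\<^sub>R v)) has_derivative (\<lambda>t. H (x + s *\<^sub>R v) (t *\<^sub>R v))) (at s)"
      by (rule has_derivative_compose[OF lin DV_deriv])
    then have "((\<lambda>s. DV (x + s *\<^sub>R v) \<bullet> v) has_derivative (\<lambda>t. H (x + s *\<^sub>R v) (t *\<^sub>R v) \<bullet> v)) (at s)"
      by (auto intro!: derivative_eq_intros)
    moreover have "(\<lambda>t. H (x + s *\<^sub>R v) (t *\<^sub>R v) \<bullet> v) = (*) (v \<bullet> H (x + s *\<^sub>R v) v)"
      using hl[of "x + s *\<^sub>R v"] by (auto simp: linear_scale inner_commute mult.commute)
    ultimately show ?thesis by (simp add: has_field_derivative_def)
  qed
  define k1 where "k1 s = DV (x + s *\<^sub>R v) \<bullet> v - DV x \<bullet> v - s * Q" for s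
  have dk1: "(k1 has_real_derivative (v \<bullet> H (x + s *\<^sub>R v) v - Q)) (at s)" for s
    unfolding k1_def by (auto intro!: derivative_eq_intros dw1)
  have k1le: "k1 s \<le> 0" if "0 \<le> s" "s \<le> r" for s
  proof -
    have "k1 s \<le> k1 0"
      by (rule deriv_nonpos_imp_antimono[OF dk1]) (use Qb that in auto)
    then show ?thesis by (simp add: k1_def)
  qed
  define k where "k s = V (x + s *\<^sub>R v) - V x - s * (DV x \<bullet> v) - s^2/2 * Q" for s
  have dk: "(k has_real_derivative k1 s) (at s)" for s
    unfolding k_def k1_def by (auto intro!: derivative_eq_intros dw simp: power2_eq_square algebra_simps)
  have "k h \<le> k 0"
    by (rule deriv_nonpos_imp_antimono[OF dk]) (use k1le h in auto)
  then show ?thesis by (simp add: k_def)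
qed



lemma hyb_state_0: "hyb_state f \<phi> u x0 0 = (0, x0)" by (simp add: hyb_state_def)
lemma hyb_state_Suc: "hyb_state f \<phi> u x0 (Suc i) =
  (fst (hyb_state f \<phi> u x0 i) + \<phi> (snd (hyb_state f \<phi> u x0 i)) * exp (- u (fst (hyb_state f \<phi> u x0 i))),
   snd (hyb_state f \<phi> u x0 i) + (\<phi> (snd (hyb_state f \<phi> u x0 i)) * exp (- u (fst (hyb_state f \<phi> u x0 i)))) *\<^sub>R f (snd (hyb_state f \<phi> u x0 i)))"
  by (simp add: hyb_state_def case_prod_beta Let_def)

locale abs_sys =
  fixes f :: "'a::euclidean_space \<Rightarrow> 'a" and V \<alpha> \<phi> :: "'a \<Rightarrow> real" and lam :: real
  assumes V_cont: "continuous_on UNIV V"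
    and V_nonneg: "\<And>x. 0 \<le> V x" and V0: "V 0 = 0" and V_pos: "\<And>x. x \<noteq> 0 \<Longrightarrow> 0 < V x"
    and V_rad: "filterlim V at_top at_infinity"
    and a_cont: "continuous_on UNIV \<alpha>" and a_pos: "\<And>x. x \<noteq> 0 \<Longrightarrow> 0 < \<alpha> x"
    and a_nonneg: "\<And>x. 0 \<le> \<alpha> x"
    and p_cont: "continuous_on UNIV \<phi>" and p_pos: "\<And>x. 0 < \<phi> x"
    and lam_pos: "0 < lam"
    and descent: "\<And>x s. 0 \<le> s \<Longrightarrow> s \<le> \<phi> x \<Longrightarrow> V (x + s *\<^sub>R f x) \<le> V x - s * lam * \<alpha> x"
begin

lemma sub_bounded: "bounded {x. V x \<le> c}"
proof -
  have "eventually (\<lambda>x. c + 1 \<le> V x) at_infinity"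
    using V_rad by (simp add: filterlim_at_top)
  then obtain b where b: "\<And>x. b \<le> norm x \<Longrightarrow> c + 1 \<le> V x"
    by (auto simp: eventually_at_infinity)
  have "{x. V x \<le> c} \<subseteq> cball 0 b"
  proof
    fix x assume "x \<in> {x. V x \<le> c}"
    then show "x \<in> cball 0 b" using b[of x] by (cases "b \<le> norm x") auto
  qed
  then show ?thesis using bounded_cball bounded_subset by blast
qed

lemma sub_closed: "closed {x. V x \<le> c}"
  by (rule closed_Collect_le[OF V_cont continuous_on_const])

lemma sub_compact: "compact {x. V x \<le> c}"
  using sub_bounded sub_closed by (simp add: compact_eq_bounded_closed)

lemma small: assumes "0 < e" shows "\<exists>m>0. \<forall>y. V y < m \<longrightarrow> norm y < e"
proof -
  define S where "S = {x. V x \<le> 1} \<inter> {x. e \<le> norm x}"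
  have cS: "compact S" unfolding S_def
    by (rule compact_Int_closed[OF sub_compact]) (simp add: closed_Collect_le continuous_on_norm_id continuous_on_const)
  show ?thesis
  proof (cases "S = {}")
    case True
    show ?thesis
    proof (intro exI[of _ 1] conjI allI impI)
      fix y assume "V y < 1"
      moreover have "y \<notin> S" using True by simp
      ultimately show "norm y < e" by (auto simp: S_def)
    qed simp
  next
    case False
    obtain y0 where y0: "y0 \<in> S" "\<And>y. y \<in> S \<Longrightarrow> V y0 \<le> V y"
      using continuous_attains_inf[OF cS False continuous_on_subset[OF V_cont]] by blast
    have "y0 \<noteq> 0" using y0(1) assms by (auto simp: S_def)
    then have "0 < V y0" by (rule V_pos)
    show ?thesis
    proof (intro exI[of _ "min 1 (V y0)"] conjI allI impI)
      fix y assume "V y < min 1 (V y0)"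
      then show "norm y < e" using y0(2)[of y] by (force simp: S_def)
    qed (use \<open>0 < V y0\<close> in simp)
  qed
qed

lemma alpha_lb: assumes "0 < m" shows "\<exists>k>0. \<forall>y. m \<le> V y \<longrightarrow> V y \<le> c \<longrightarrow> k \<le> \<alpha> y"
proof -
  define S where "S = {x. V x \<le> c} \<inter> {x. m \<le> V x}"
  have cS: "compact S" unfolding S_def
    by (rule compact_Int_closed[OF sub_compact]) (simp add: closed_Collect_le continuous_on_const V_cont)
  show ?thesis
  proof (cases "S = {}")
    case True
    then show ?thesis by (intro exI[of _ 1]) (auto simp: S_def)
  next
    case False
    obtain y0 where y0: "y0 \<in> S" "\<And>y. y \<in> S \<Longrightarrow> \<alpha> y0 \<le> \<alpha> y"
      using continuous_attains_inf[OF cS False continuous_on_subset[OF a_cont]] by blast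
    have "y0 \<noteq> 0" using y0(1) assms V0 by (auto simp: S_def)
    then have "0 < \<alpha> y0" by (rule a_pos)
    then show ?thesis using y0 by (intro exI[of _ "\<alpha> y0"]) (auto simp: S_def)
  qed
qed

lemma phi_lb: "\<exists>p>0. \<forall>y. V y \<le> c \<longrightarrow> p \<le> \<phi> y"
proof (cases "{x. V x \<le> c} = {}")
  case True
  then show ?thesis by (intro exI[of _ 1]) auto
next
  case False
  obtain y0 where y0: "y0 \<in> {x. V x \<le> c}" "\<And>y. y \<in> {x. V x \<le> c} \<Longrightarrow> \<phi> y0 \<le> \<phi> y"
    using continuous_attains_inf[OF sub_compact False continuous_on_subset[OF p_cont]] by blast
  then show ?thesis using p_pos[of y0] by (intro exI[of _ "\<phi> y0"]) auto
qed

lemma ball_V: "\<exists>VR. \<forall>x. norm x \<le> R \<longrightarrow> V x \<le> VR"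
proof -
  have "compact (V ` cball 0 R)"
    by (rule compact_continuous_image[OF continuous_on_subset[OF V_cont]]) auto
  then obtain M where "\<And>z. z \<in> V ` cball 0 R \<Longrightarrow> norm z \<le> M"
    using compact_imp_bounded bounded_iff by metis
  then show ?thesis by (intro exI[of _ M]) (force simp: abs_le_iff)
qed

definition "tau u x0 i = fst (hyb_state f \<phi> u x0 i)"
definition "X u x0 i = snd (hyb_state f \<phi> u x0 i)"
definition "hh u x0 i = \<phi> (X u x0 i) * exp (- u (tau u x0 i))"

lemma tau_0[simp]: "tau u x0 0 = 0" and X_0[simp]: "X u x0 0 = x0"
  by (simp_all add: tau_def X_def hyb_state_0)
lemma tau_Suc: "tau u x0 (Suc i) = tau u x0 i + hh u x0 i"
  and X_Suc: "X u x0 (Suc i) = X u x0 i + hh u x0 i *\<^sub>R f (X u x0 i)"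
  by (simp_all add: tau_def X_def hh_def hyb_state_Suc)

lemma hh_pos: "0 < hh u x0 i" by (simp add: hh_def p_pos)

lemma tau_nonneg: "0 \<le> tau u x0 i"
  by (induction i) (auto simp: tau_Suc intro: add_nonneg_nonneg less_imp_le[OF hh_pos])

lemma hh_le: assumes "admissible_input u" shows "hh u x0 i \<le> \<phi> (X u x0 i)"
proof -
  have "0 \<le> u (tau u x0 i)" using assms tau_nonneg by (auto simp: admissible_input_def)
  then have "exp (- u (tau u x0 i)) \<le> 1" by simp
  then show ?thesis unfolding hh_def using p_pos[of "X u x0 i"]
    by (simp add: mult_left_le)
qed

lemma V_step: assumes "admissible_input u"
  shows "V (X u x0 (Suc i)) \<le> V (X u x0 i) - hh u x0 i * lam * \<alpha> (X u x0 i)"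
  unfolding X_Suc by (rule descent[OF less_imp_le[OF hh_pos] hh_le[OF assms]])

lemma V_Suc_le: assumes "admissible_input u" shows "V (X u x0 (Suc i)) \<le> V (X u x0 i)"
proof -
  have "0 \<le> hh u x0 i * lam * \<alpha> (X u x0 i)"
    using hh_pos lam_pos a_nonneg by (simp add: less_imp_le)
  then show ?thesis using V_step[OF assms, of x0 i] by linarith
qed

lemma V_mono: assumes "admissible_input u" "j \<le> i" shows "V (X u x0 i) \<le> V (X u x0 j)"
  using assms(2)
proof (induction i)
  case 0 then show ?case by simp
next
  case (Suc i)
  show ?case
  proof (cases "j = Suc i")
    case False
    then have "j \<le> i" using Suc by simp
    then show ?thesis using Suc V_Suc_le[OF assms(1), of x0 i] by linarith
  qed simp
qed

lemma tau_mono: "i \<le> j \<Longrightarrow> tau u x0 i \<le> tau u x0 j"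
proof (induction j)
  case (Suc j)
  then show ?case using hh_pos[of u x0 j] by (cases "i = Suc j") (auto simp: tau_Suc)
qed simp

lemma tau_sum: "tau u x0 n = (\<Sum>j<n. hh u x0 j)"
  by (induction n) (simp_all add: tau_Suc)

lemma V_sum: assumes "admissible_input u"
  shows "V (X u x0 n) + lam * (\<Sum>j<n. hh u x0 j * \<alpha> (X u x0 j)) \<le> V x0"
proof (induction n)
  case (Suc n)
  then show ?case using V_step[OF assms, of x0 n] by (simp add: algebra_simps)
qed simp

lemma sol_le: assumes "admissible_input u" "hyb_sol f \<phi> u x0 t y"
  shows "\<exists>i. V y \<le> V (X u x0 i) \<and> tau u x0 i \<le> t \<and> t \<le> tau u x0 (Suc i)"
proof -
  obtain i where i: "tau u x0 i \<le> t" "t \<le> tau u x0 (Suc i)"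
    "y = X u x0 i + (t - tau u x0 i) *\<^sub>R f (X u x0 i)"
    using assms(2) unfolding hyb_sol_def tau_def[symmetric] X_def[symmetric] by blast
  have "t - tau u x0 i \<le> \<phi> (X u x0 i)"
    using i(2) hh_le[OF assms(1), of x0 i] by (simp add: tau_Suc)
  then have "V y \<le> V (X u x0 i) - (t - tau u x0 i) * lam * \<alpha> (X u x0 i)"
    unfolding i(3) by (intro descent) (use i in auto)
  moreover have "0 \<le> (t - tau u x0 i) * lam * \<alpha> (X u x0 i)"
    using i lam_pos a_nonneg by simp
  ultimately show ?thesis using i by (intro exI[of _ i]) auto
qed

lemma V_traj: assumes "admissible_input u" shows "V (X u x0 i) \<le> V x0"
  using V_mono[OF assms, of 0 i] by simp

lemma tau_unbounded: assumes "admissible_input u" shows "\<exists>n. t \<le> tau u x0 n"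
proof (rule ccontr)
  assume "\<not> ?thesis"
  then have lt: "\<And>n. tau u x0 n < t" by (simp add: not_le)
  have "bdd_above (u ` {0..t})" using assms by (simp add: admissible_input_def)
  then obtain U where U0: "\<forall>z\<in>u ` {0..t}. z \<le> U" by (auto simp: bdd_above_def)
  have U: "u s \<le> U" if "s \<in> {0..t}" for s using U0 that by blast
  obtain p where p: "0 < p" "\<And>y. V y \<le> V x0 \<Longrightarrow> p \<le> \<phi> y" using phi_lb by blast
  define c where "c = p * exp (- U)"
  have c: "0 < c" using p by (simp add: c_def)
  have hc: "c \<le> hh u x0 n" for n
  proof -
    have "tau u x0 n \<in> {0..t}" using tau_nonneg[of u x0 n] lt[of n] by simp
    then have "u (tau u x0 n) \<le> U" by (rule U)
    then have e: "exp (- U) \<le> exp (- u (tau u x0 n))" by simp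
    have pp: "p \<le> \<phi> (X u x0 n)" by (rule p(2)[OF V_traj[OF assms]])
    have "p * exp (- U) \<le> \<phi> (X u x0 n) * exp (- u (tau u x0 n))"
      by (rule mult_mono[OF pp e]) (use p_pos[of "X u x0 n"] in simp_all)
    then show ?thesis unfolding c_def hh_def .
  qed
  have rc: "real n * c \<le> tau u x0 n" for n
  proof (induction n)
    case (Suc n)
    have "real (Suc n) * c = real n * c + c" by (simp add: algebra_simps)
    moreover have "tau u x0 (Suc n) = tau u x0 n + hh u x0 n" by (rule tau_Suc)
    ultimately show ?case using Suc.IH hc[of n] by linarith
  qed simp
  obtain n where "t < real n * c" using reals_Archimedean3[OF c] by blast
  then show False using lt[of n] rc[of n] by linarith
qed

lemma existence: assumes "admissible_input u" "0 \<le> t" shows "\<exists>y. hyb_sol f \<phi> u x0 t y"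
proof -
  obtain n where n: "t \<le> tau u x0 n" using tau_unbounded[OF assms(1)] by blast
  have "\<forall>t. 0 \<le> t \<longrightarrow> t \<le> tau u x0 n \<longrightarrow> (\<exists>i. tau u x0 i \<le> t \<and> t \<le> tau u x0 (Suc i))"
  proof (induction n)
    case 0
    then show ?case using tau_mono[of 0 1 u x0] by (auto intro!: exI[of _ 0])
  next
    case (Suc n)
    show ?case
    proof (intro allI impI)
      fix t :: real assume t: "0 \<le> t" "t \<le> tau u x0 (Suc n)"
      show "\<exists>i. tau u x0 i \<le> t \<and> t \<le> tau u x0 (Suc i)"
      proof (cases "t \<le> tau u x0 n")
        case True then show ?thesis using Suc.IH t(1) by blast
      next
        case False then show ?thesis using t(2) by (intro exI[of _ n]) simp
      qed
    qed
  qed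
  then obtain i where "tau u x0 i \<le> t" "t \<le> tau u x0 (Suc i)" using n assms(2) by blast
  then show ?thesis unfolding hyb_sol_def tau_def[symmetric] X_def[symmetric] by blast
qed

lemma u1: "\<forall>\<epsilon>>0. \<exists>\<delta>'>0. \<forall>x0 u t y. admissible_input u \<and> norm x0 < \<delta>' \<and> t \<ge> 0 \<and> hyb_sol f \<phi> u x0 t y \<longrightarrow> norm y < \<epsilon>"
proof (intro allI impI)
  fix e :: real assume e: "0 < e"
  obtain m where m: "0 < m" "\<And>y. V y < m \<Longrightarrow> norm y < e" using small[OF e] by blast
  have "isCont V 0" using V_cont by (simp add: continuous_on_eq_continuous_at)
  then obtain d where d: "0 < d" "\<And>x. dist x 0 < d \<Longrightarrow> dist (V x) (V 0) < m"
    using m(1) unfolding continuous_at_eps_delta by blast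
  show "\<exists>d>0. \<forall>x0 u t y. admissible_input u \<and> norm x0 < d \<and> 0 \<le> t \<and> hyb_sol f \<phi> u x0 t y \<longrightarrow> norm y < e"
  proof (intro exI[of _ d] conjI allI impI)
    fix x0 u t y assume H: "admissible_input u \<and> norm x0 < d \<and> 0 \<le> (t::real) \<and> hyb_sol f \<phi> u x0 t y"
    then obtain i where "V y \<le> V (X u x0 i)" using sol_le[of u x0 t y] H by blast
    moreover have "V (X u x0 i) \<le> V x0" using V_traj[of u x0 i] H by blast
    moreover have "V x0 < m" using d(2)[of x0] H V0 V_nonneg[of x0] by (simp add: dist_norm)
    ultimately show "norm y < e" using m by simp
  qed (rule d(1))
qed

lemma u2: "\<forall>R. \<exists>M. \<forall>x0 u t y. admissible_input u \<and> norm x0 \<le> R \<and> t \<ge> 0 \<and> hyb_sol f \<phi> u x0 t y \<longrightarrow> norm y \<le> M"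
proof (intro allI impI)
  fix R :: real
  obtain VR where VR: "\<And>x. norm x \<le> R \<Longrightarrow> V x \<le> VR" using ball_V by blast
  from sub_bounded[of VR] obtain M where M0: "\<forall>y\<in>{x. V x \<le> VR}. norm y \<le> M"
    unfolding bounded_iff by blast
  have M: "norm y \<le> M" if "V y \<le> VR" for y using M0 that by simp
  show "\<exists>M. \<forall>x0 u t y. admissible_input u \<and> norm x0 \<le> R \<and> 0 \<le> t \<and> hyb_sol f \<phi> u x0 t y \<longrightarrow> norm y \<le> M"
  proof (intro exI[of _ M] allI impI)
    fix x0 u t y assume H: "admissible_input u \<and> norm x0 \<le> R \<and> 0 \<le> (t::real) \<and> hyb_sol f \<phi> u x0 t y"
    then obtain i where "V y \<le> V (X u x0 i)" using sol_le[of u x0 t y] H by blast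
    moreover have "V (X u x0 i) \<le> V x0" using V_traj[of u x0 i] H by blast
    moreover have "V x0 \<le> VR" using VR H by blast
    ultimately show "norm y \<le> M" using M by simp
  qed
qed

lemma u3: "\<forall>\<epsilon>>0. \<forall>R. \<exists>T. \<forall>x0 u t y. admissible_input u \<and> norm x0 \<le> R \<and> t \<ge> T \<and> hyb_sol f \<phi> u x0 t y \<longrightarrow> norm y \<le> \<epsilon>"
proof (intro allI impI)
  fix e R :: real assume e: "0 < e"
  obtain m where m: "0 < m" "\<And>y. V y < m \<Longrightarrow> norm y < e" using small[OF e] by blast
  obtain VR where VR: "\<And>x. norm x \<le> R \<Longrightarrow> V x \<le> VR" using ball_V by blast
  obtain k where k: "0 < k" "\<And>y. m \<le> V y \<Longrightarrow> V y \<le> VR \<Longrightarrow> k \<le> \<alpha> y"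
    using alpha_lb[OF m(1)] by blast
  define T where "T = VR / (lam * k) + 1"
  show "\<exists>T. \<forall>x0 u t y. admissible_input u \<and> norm x0 \<le> R \<and> T \<le> t \<and> hyb_sol f \<phi> u x0 t y \<longrightarrow> norm y \<le> e"
  proof (intro exI[of _ T] allI impI)
    fix x0 u t y assume H: "admissible_input u \<and> norm x0 \<le> R \<and> T \<le> (t::real) \<and> hyb_sol f \<phi> u x0 t y"
    then have adm: "admissible_input u" by blast
    obtain i where i: "V y \<le> V (X u x0 i)" "t \<le> tau u x0 (Suc i)" using sol_le[of u x0 t y] H by blast
    have x0R: "V x0 \<le> VR" using VR H by blast
    have "V (X u x0 i) < m"
    proof (rule ccontr)
      assume "\<not> ?thesis"
      then have mi: "m \<le> V (X u x0 i)" by simp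
      have kj: "k \<le> \<alpha> (X u x0 j)" if "j < Suc i" for j
      proof (rule k(2))
        show "m \<le> V (X u x0 j)" using mi V_mono[OF adm, of j i x0] that by simp
        show "V (X u x0 j) \<le> VR" using V_traj[OF adm, of x0 j] x0R by simp
      qed
      have "(\<Sum>j<Suc i. hh u x0 j * k) \<le> (\<Sum>j<Suc i. hh u x0 j * \<alpha> (X u x0 j))"
      proof (rule sum_mono)
        fix j assume "j \<in> {..<Suc i}"
        then show "hh u x0 j * k \<le> hh u x0 j * \<alpha> (X u x0 j)"
          using kj[of j] hh_pos[of u x0 j] by (intro mult_left_mono) auto
      qed
      moreover have "(\<Sum>j<Suc i. hh u x0 j * k) = k * tau u x0 (Suc i)"
        unfolding tau_sum sum_distrib_left by (simp add: mult.commute del: sum.lessThan_Suc)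
      ultimately have "k * tau u x0 (Suc i) \<le> (\<Sum>j<Suc i. hh u x0 j * \<alpha> (X u x0 j))"
        by linarith
      moreover have "V (X u x0 (Suc i)) + lam * (\<Sum>j<Suc i. hh u x0 j * \<alpha> (X u x0 j)) \<le> VR"
        using V_sum[OF adm, of x0 "Suc i"] x0R by simp
      ultimately have "lam * (k * tau u x0 (Suc i)) \<le> VR"
      proof -
        assume a1: "k * tau u x0 (Suc i) \<le> (\<Sum>j<Suc i. hh u x0 j * \<alpha> (X u x0 j))"
          and a2: "V (X u x0 (Suc i)) + lam * (\<Sum>j<Suc i. hh u x0 j * \<alpha> (X u x0 j)) \<le> VR"
        have "lam * (k * tau u x0 (Suc i)) \<le> lam * (\<Sum>j<Suc i. hh u x0 j * \<alpha> (X u x0 j))"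
          using a1 lam_pos by (intro mult_left_mono) auto
        then show ?thesis using a2 V_nonneg[of "X u x0 (Suc i)"] by linarith
      qed
      moreover have "lam * (k * T) \<le> lam * (k * tau u x0 (Suc i))"
        using H i(2) k(1) lam_pos by (intro mult_left_mono) auto
      moreover have "lam * (k * T) = VR + lam * k"
        unfolding T_def using lam_pos k(1) by (simp add: field_simps)
      moreover have "0 < lam * k" using lam_pos k(1) by simp
      ultimately show False by linarith
    qed
    then show "norm y \<le> e" using m(2)[of y] i(1) by simp
  qed
qed


lemma urgas: "URGAS f \<phi>"
  unfolding URGAS_def using existence u1 u2 u3 by blast

end


lemma cont_mv: fixes A :: "'a::topological_space \<Rightarrow> real^'n^'m"
  assumes "continuous_on S A" "continuous_on S v"
  shows "continuous_on S (\<lambda>x. A x *v v x)"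
  unfolding matrix_vector_mult_def
  by (intro continuous_intros assms)

lemma sup_bdd: fixes g :: "real \<Rightarrow> real"
  assumes "continuous_on {a..b} g" shows "bdd_above (g ` {a..b})"
  by (intro bounded_imp_bdd_above compact_imp_bounded compact_continuous_image[OF assms compact_Icc])

lemma sup_cont: fixes G :: "'a::heine_borel \<times> real \<Rightarrow> real"
  assumes G: "continuous_on UNIV G" and ab: "a \<le> b"
  shows "continuous_on UNIV (\<lambda>x. Sup ((\<lambda>h. G (x,h)) ` {a..b}))"
proof -
  have cG: "continuous_on {a..b} (\<lambda>h. G (x,h))" for x
    by (rule continuous_on_compose2[OF G]) (auto intro!: continuous_intros)
  have bdd: "bdd_above ((\<lambda>h. G (x,h)) ` {a..b})" for x by (rule sup_bdd[OF cG])
  have ne: "{a..b} \<noteq> {}" using ab by simp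
  have "isCont (\<lambda>x. Sup ((\<lambda>h. G (x,h)) ` {a..b})) x0" for x0
    unfolding continuous_at_eps_delta
  proof (intro allI impI)
    fix e :: real assume e: "0 < e"
    define C where "C = cball x0 1 \<times> {a..b}"
    have "compact C" unfolding C_def by (intro compact_Times compact_cball compact_Icc)
    then have "uniformly_continuous_on C G"
      by (rule compact_uniformly_continuous[OF continuous_on_subset[OF G], rotated]) simp
    then obtain d where d: "0 < d" "\<And>p p'. p \<in> C \<Longrightarrow> p' \<in> C \<Longrightarrow> dist p' p < d \<Longrightarrow> dist (G p') (G p) < e/2"
      unfolding uniformly_continuous_on_def using e by (metis half_gt_zero)
    show "\<exists>d>0. \<forall>x. dist x x0 < d \<longrightarrow> dist (Sup ((\<lambda>h. G (x,h)) ` {a..b})) (Sup ((\<lambda>h. G (x0,h)) ` {a..b})) < e"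
    proof (intro exI[of _ "min d 1"] conjI allI impI)
      fix x assume x: "dist x x0 < min d 1"
      have close: "\<bar>G (x,h) - G (x0,h)\<bar> < e/2" if h: "h \<in> {a..b}" for h
      proof -
        have "(x,h) \<in> C" "(x0,h) \<in> C" using x h by (auto simp: C_def dist_commute)
        moreover have "dist (x,h) (x0,h) < d" using x by (simp add: dist_Pair_Pair)
        ultimately show ?thesis using d(2)[of "(x0,h)" "(x,h)"] by (simp add: dist_real_def)
      qed
      have le1: "Sup ((\<lambda>h. G (x,h)) ` {a..b}) \<le> Sup ((\<lambda>h. G (x0,h)) ` {a..b}) + e/2"
      proof (rule cSUP_least[OF ne])
        fix h assume h: "h \<in> {a..b}"
        have "G (x0,h) \<le> Sup ((\<lambda>h. G (x0,h)) ` {a..b})" by (rule cSUP_upper[OF h bdd])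
        then show "G (x,h) \<le> Sup ((\<lambda>h. G (x0,h)) ` {a..b}) + e/2" using close[OF h] by linarith
      qed
      have le2: "Sup ((\<lambda>h. G (x0,h)) ` {a..b}) \<le> Sup ((\<lambda>h. G (x,h)) ` {a..b}) + e/2"
      proof (rule cSUP_least[OF ne])
        fix h assume h: "h \<in> {a..b}"
        have "G (x,h) \<le> Sup ((\<lambda>h. G (x,h)) ` {a..b})" by (rule cSUP_upper[OF h bdd])
        then show "G (x0,h) \<le> Sup ((\<lambda>h. G (x,h)) ` {a..b}) + e/2" using close[OF h] by linarith
      qed
      show "dist (Sup ((\<lambda>h. G (x,h)) ` {a..b})) (Sup ((\<lambda>h. G (x0,h)) ` {a..b})) < e"
        using le1 le2 e by (simp add: dist_real_def abs_less_iff)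
    qed (use d(1) in simp)
  qed
  then show ?thesis by (simp add: continuous_at_imp_continuous_on)
qed

lemma loc_lip_cont: assumes "loc_lipschitz f" shows "continuous_on UNIV f"
proof -
  have "isCont f x" for x
  proof -
    obtain e L where e: "0 < e" "lipschitz_on L (ball x e) f" using assms unfolding loc_lipschitz_def by blast
    have "continuous_on (ball x e) f" by (rule lipschitz_on_continuous_on[OF e(2)])
    then show ?thesis using e(1) by (simp add: continuous_on_interior)
  qed
  then show ?thesis by (simp add: continuous_at_imp_continuous_on)
qed



theorem corollary4p7:
  fixes f :: "real^'n \<Rightarrow> real^'n"
    and V :: "real^'n \<Rightarrow> real"
    and DV :: "real^'n \<Rightarrow> real^'n"
    and HV :: "real^'n \<Rightarrow> real^'n^'n"
    and r del lam :: real
    and N :: "(real^'n) set"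
  assumes f_lip: "loc_lipschitz f"
    and f0: "f 0 = 0"
    and V_deriv: "\<And>x. (V has_derivative (\<lambda>v. DV x \<bullet> v)) (at x)"
    and DV_deriv: "\<And>x. (DV has_derivative (\<lambda>v. HV x *v v)) (at x)"
    and HV_cont: "continuous_on UNIV HV"
    and V_nonneg: "\<And>x. V x \<ge> 0"
    and V0: "V 0 = 0"
    and V_pos: "\<And>x. x \<noteq> 0 \<Longrightarrow> V x > 0"
    and V_rad: "filterlim V at_top at_infinity"
    and V_lyap: "\<And>x. x \<noteq> 0 \<Longrightarrow> DV x \<bullet> f x < 0"
    and r_pos: "r > 0"
    and del: "0 < del" "del \<le> r"
    and lam: "0 < lam" "lam < 1"
    and N: "0 \<in> interior N"
    and hyp: "\<And>x. x \<in> N \<Longrightarrow> del * q_fun f HV r x \<le> - 2 * (1 - lam) * (DV x \<bullet> f x)"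
  shows "(\<exists>\<phi>. continuous_on UNIV \<phi> \<and> (\<forall>x. 0 < \<phi> x \<and> \<phi> x \<le> r) \<and> URGAS f \<phi>) \<and>
         (\<forall>\<phi>. continuous_on UNIV \<phi> \<and> (\<forall>x. 0 < \<phi> x \<and> \<phi> x \<le> r) \<and>
              (\<forall>x. \<phi> x * q_fun f HV r x \<le> - 2 * (1 - lam) * (DV x \<bullet> f x))
              \<longrightarrow> URGAS f \<phi>)"
proof -
  have fc: "continuous_on UNIV f" by (rule loc_lip_cont[OF f_lip])
  have DVc: "continuous_on UNIV DV"
    by (meson continuous_at_imp_continuous_on has_derivative_continuous DV_deriv)
  have Vc: "continuous_on UNIV V"
    by (meson continuous_at_imp_continuous_on has_derivative_continuous V_deriv)
  define \<alpha> where "\<alpha> x = - (DV x \<bullet> f x)" for x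
  have ac: "continuous_on UNIV \<alpha>" unfolding \<alpha>_def by (intro continuous_intros DVc fc)
  have apos: "0 < \<alpha> x" if "x \<noteq> 0" for x using V_lyap[OF that] by (simp add: \<alpha>_def)
  have anon: "0 \<le> \<alpha> x" for x using apos[of x] f0 by (cases "x = 0") (auto simp: \<alpha>_def)
  define q where "q = q_fun f HV r"
  define G where "G p = f (fst p) \<bullet> (HV (fst p + snd p *\<^sub>R f (fst p)) *v f (fst p))" for p
  have Gc: "continuous_on UNIV G"
  proof -
    have c1: "continuous_on UNIV (\<lambda>p::(real^'n)\<times>real. f (fst p))"
      by (rule continuous_on_compose2[OF fc]) (auto intro!: continuous_intros)
    have c2: "continuous_on UNIV (\<lambda>p::(real^'n)\<times>real. HV (fst p + snd p *\<^sub>R f (fst p)))"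
      by (rule continuous_on_compose2[OF HV_cont]) (auto intro!: continuous_intros c1)
    show ?thesis unfolding G_def by (intro continuous_intros cont_mv c1 c2)
  qed
  have qG: "q x = Sup ((\<lambda>h. G (x,h)) ` {0..r})" for x by (simp add: q_def q_fun_def G_def)
  have qc: "continuous_on UNIV q"
    unfolding qG[abs_def] by (rule sup_cont[OF Gc]) (use r_pos in simp)
  have Qb: "f x \<bullet> (HV (x + s *\<^sub>R f x) *v f x) \<le> q x" if "s \<in> {0..r}" for x s
  proof -
    have "continuous_on {0..r} (\<lambda>h. G (x,h))"
      by (rule continuous_on_compose2[OF Gc]) (auto intro!: continuous_intros)
    then have "G (x,s) \<le> q x" unfolding qG by (intro cSUP_upper that sup_bdd)
    then show ?thesis by (simp add: G_def)
  qed
  have key: "URGAS f \<phi>" if p_cont: "continuous_on UNIV \<phi>" and pr: "\<And>x. 0 < \<phi> x \<and> \<phi> x \<le> r"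
    and cond: "\<And>x. \<phi> x * q x \<le> - 2 * (1 - lam) * (DV x \<bullet> f x)" for \<phi>
  proof -
    have descent: "V (x + s *\<^sub>R f x) \<le> V x - s * lam * \<alpha> x" if s: "0 \<le> s" "s \<le> \<phi> x" for x s
    proof -
      have tb: "V (x + s *\<^sub>R f x) \<le> V x + s * (DV x \<bullet> f x) + s^2 / 2 * q x"
        by (rule taylor_bound[where H = "\<lambda>x v. HV x *v v", OF V_deriv DV_deriv Qb])
           (use s pr[of x] in auto)
      have dv: "DV x \<bullet> f x = - \<alpha> x" by (simp add: \<alpha>_def)
      have "- 2 * (1 - lam) * (DV x \<bullet> f x) = 2 * (1 - lam) * \<alpha> x" by (simp add: \<alpha>_def algebra_simps)
      then have c: "\<phi> x * q x \<le> 2 * (1 - lam) * \<alpha> x" using cond[of x] by linarith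
      have "s * (s * q x) \<le> s * (2 * (1 - lam) * \<alpha> x)"
      proof (cases "q x \<le> 0")
        case True
        then have "s * (s * q x) \<le> 0" using s by (simp add: mult_nonneg_nonpos)
        moreover have "0 \<le> s * (2 * (1 - lam) * \<alpha> x)" using s lam anon[of x] by simp
        ultimately show ?thesis by linarith
      next
        case False
        have "s * q x \<le> \<phi> x * q x" using s False by (intro mult_right_mono) auto
        then have "s * q x \<le> 2 * (1 - lam) * \<alpha> x" using c by linarith
        then show ?thesis using s by (intro mult_left_mono) auto
      qed
      then have "s^2 / 2 * q x \<le> s * (1 - lam) * \<alpha> x"
        by (simp add: power2_eq_square algebra_simps)
      then show ?thesis using tb dv by (simp add: algebra_simps)
    qed
    interpret abs_sys f V \<alpha> \<phi> lam
      by unfold_locales (use Vc V_nonneg V0 V_pos V_rad ac apos anon p_cont pr lam descent in auto)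
    show ?thesis by (rule urgas)
  qed
  obtain \<rho> where \<rho>: "0 < \<rho>" "ball 0 \<rho> \<subseteq> N" using N mem_interior by blast
  define \<psi> where "\<psi> x = 2 * (1 - lam) * max (\<alpha> x) (\<rho> - norm x) / max (q x) 1" for x
  define \<phi> where "\<phi> x = min del (\<psi> x)" for x
  have pc: "continuous_on UNIV \<phi>" unfolding \<phi>_def \<psi>_def
    by (intro continuous_intros ac qc) auto
  have ppos: "0 < \<phi> x" for x
  proof -
    have "0 < max (\<alpha> x) (\<rho> - norm x)" using apos[of x] \<rho>(1) by (cases "x = 0") auto
    then have "0 < \<psi> x" unfolding \<psi>_def using lam by (intro divide_pos_pos mult_pos_pos) auto
    then show ?thesis using del by (simp add: \<phi>_def)
  qed
  have pr: "0 < \<phi> x \<and> \<phi> x \<le> r" for x using ppos[of x] del by (simp add: \<phi>_def)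
  have cond: "\<phi> x * q x \<le> - 2 * (1 - lam) * (DV x \<bullet> f x)" for x
  proof -
    have rhs: "- 2 * (1 - lam) * (DV x \<bullet> f x) = 2 * (1 - lam) * \<alpha> x" by (simp add: \<alpha>_def algebra_simps)
    have rnn: "0 \<le> 2 * (1 - lam) * \<alpha> x" using lam anon[of x] by simp
    show ?thesis
    proof (cases "q x \<le> 0")
      case True
      then have "\<phi> x * q x \<le> 0" using ppos[of x] using mult_nonneg_nonpos[of "\<phi> x" "q x"] by simp
      then show ?thesis using rhs rnn by linarith
    next
      case qpos: False
      show ?thesis
      proof (cases "x \<in> N")
        case True
        have "\<phi> x * q x \<le> del * q x" using qpos by (intro mult_right_mono) (auto simp: \<phi>_def)
        then show ?thesis using hyp[OF True] by (simp add: q_def)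
      next
        case False
        then have "\<rho> \<le> norm x" using \<rho>(2) by (force simp: dist_norm)
        then have am: "max (\<alpha> x) (\<rho> - norm x) = \<alpha> x" using anon[of x] by simp
        have "\<phi> x * q x \<le> \<psi> x * q x" using qpos by (intro mult_right_mono) (auto simp: \<phi>_def)
        also have "\<psi> x * q x = 2 * (1 - lam) * \<alpha> x * (q x / max (q x) 1)"
          unfolding \<psi>_def am by simp
        also have "\<dots> \<le> 2 * (1 - lam) * \<alpha> x"
          using rnn by (intro mult_left_le) auto
        finally show ?thesis using rhs by simp
      qed
    qed
  qed
  show ?thesis
  proof (intro conjI allI impI)
    show "\<exists>\<phi>. continuous_on UNIV \<phi> \<and> (\<forall>x. 0 < \<phi> x \<and> \<phi> x \<le> r) \<and> URGAS f \<phi>"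
      using pc pr key[OF pc pr cond] by blast
  next
    fix \<phi>' :: "real^'n \<Rightarrow> real"
    assume H: "continuous_on UNIV \<phi>' \<and> (\<forall>x. 0 < \<phi>' x \<and> \<phi>' x \<le> r) \<and>
              (\<forall>x. \<phi>' x * q_fun f HV r x \<le> - 2 * (1 - lam) * (DV x \<bullet> f x))"
    show "URGAS f \<phi>'" by (rule key) (use H in \<open>auto simp: q_def\<close>)
  qed
qed

end
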